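(* Let $N$ be a tree rooted at $g$ with positive edge capacities $c_e$, and let $T$ be the tree obtained from $N$ by the procedure Create-Binary-Tree described in the context. Let $G_R$ be any request graph on $V\cup\{g\}$ with bandwidths $f_e$. Then $N$ and $T$ have the same set of leaves $L$, and for every embedding $\pi:V\to L$ (with $\pi(g)=g$), the congestion of $\pi$ as an embedding into $N$ equals the congestion of $\pi$ as an embedding into $T$. In particular, the minimum congestion of embedding $G_R$ into $N$ equals the minimum congestion of embedding $G_R$ into $T$.
   Context: Create-Binary-Tree$(N,g)$: for every node $v$ of $N$ with degree greater than $3$, let $u_1,\dots,u_d$ be the children of $v$ and $e_1,\dots,e_d$ the edges joining $v$ to $u_1,\dots,u_d$; replace $e_1,\dots,e_d$ by a (complete) binary tree rooted at $v$ whose leaves are $u_1,\dots,u_d$, where the new intermediate nodes are auxiliary (non-leaf) nodes; set the capacity of the edge from $u_i$ to its new parent equal to $c_{e_i}$, and the capacity of every other new edge equal to $\infty$. The request graph $G_R$ has vertex set $V\cup\{g\}$, $V=\{v_1,\dots,v_k\}$ virtual machines, edges $(v_i,g)$ or $(v_i,v_j)$ with bandwidths $f_e\ge0$. An embedding is an injective map $\pi:V\to L$ into the leaves, with $\pi(g)=g$. For a host tree $H$ and edge $e$ of $H$, $\mathrm{cong}(\pi,e)=\frac1{c_e}\sum f_{(u,v)}$ over request edges $(u,v)$ whose path in $H$ between $\pi(u)$ and $\pi(v)$ contains $e$ (an edge of capacity $\infty$ has congestion $0$); the congestion of $\pi$ is the maximum over edges of $H$. *)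

theory Defs
  imports Complex_Main "HOL-Library.Extended_Real"
begin

text \<open>A rooted tree: finite node set Nd, root g, parent function par.
  Every non-root node w determines the edge (w, par w); edges are thus
  identified with the non-root nodes.\<close>

definition rooted_tree :: "'n set \<Rightarrow> ('n \<Rightarrow> 'n) \<Rightarrow> 'n \<Rightarrow> bool" where
  "rooted_tree Nd par g \<longleftrightarrow> finite Nd \<and> g \<in> Nd \<and> par g = g \<and>
     (\<forall>v\<in>Nd - {g}. par v \<in> Nd) \<and> (\<forall>v\<in>Nd. \<exists>k. (par ^^ k) v = g)"

definition children :: "'n set \<Rightarrow> ('n \<Rightarrow> 'n) \<Rightarrow> 'n \<Rightarrow> 'n \<Rightarrow> 'n set" where
  "children Nd par g v = {u \<in> Nd - {g}. par u = v}"

definition degree :: "'n set \<Rightarrow> ('n \<Rightarrow> 'n) \<Rightarrow> 'n \<Rightarrow> 'n \<Rightarrow> nat" where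
  "degree Nd par g v = card (children Nd par g v) + (if v = g then 0 else 1)"

definition leaves :: "'n set \<Rightarrow> ('n \<Rightarrow> 'n) \<Rightarrow> 'n \<Rightarrow> 'n set" where
  "leaves Nd par g = {u \<in> Nd - {g}. children Nd par g u = {}}"

definition anc :: "('n \<Rightarrow> 'n) \<Rightarrow> 'n \<Rightarrow> 'n \<Rightarrow> bool" where
  "anc par w x \<longleftrightarrow> (\<exists>k. (par ^^ k) x = w)"

text \<open>The edge (w, par w) lies on the tree path between x and y iff w is an
  ancestor-or-self of exactly one of x, y.\<close>
definition on_path :: "('n \<Rightarrow> 'n) \<Rightarrow> 'n \<Rightarrow> 'n \<Rightarrow> 'n \<Rightarrow> bool" where
  "on_path par w x y \<longleftrightarrow> anc par w x \<noteq> anc par w y"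

text \<open>Request vertices have type 'v option: Some v is a virtual machine, None is g.
  An embedding pi : V \<rightarrow> L is extended by pi(g) = g via case_option g pi.\<close>

definition request_graph :: "'v set \<Rightarrow> ('v option \<times> 'v option) set \<Rightarrow>
    ('v option \<times> 'v option \<Rightarrow> real) \<Rightarrow> bool" where
  "request_graph V ER f \<longleftrightarrow> finite V \<and> finite ER \<and>
     ER \<subseteq> (Some ` V) \<times> (insert None (Some ` V)) \<and>
     (\<forall>(a,b)\<in>ER. a \<noteq> b) \<and> (\<forall>e\<in>ER. f e \<ge> 0)"

definition embedding :: "'n set \<Rightarrow> ('n \<Rightarrow> 'n) \<Rightarrow> 'n \<Rightarrow> 'v set \<Rightarrow> ('v \<Rightarrow> 'n) \<Rightarrow> bool" where
  "embedding Nd par g V \<pi> \<longleftrightarrow> inj_on \<pi> V \<and> \<pi> ` V \<subseteq> leaves Nd par g"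

definition load :: "('n \<Rightarrow> 'n) \<Rightarrow> ('v option \<times> 'v option) set \<Rightarrow>
    ('v option \<times> 'v option \<Rightarrow> real) \<Rightarrow> ('v option \<Rightarrow> 'n) \<Rightarrow> 'n \<Rightarrow> real" where
  "load par ER f pos w = (\<Sum>e\<in>ER. if on_path par w (pos (fst e)) (pos (snd e)) then f e else 0)"

definition edge_cong :: "('n \<Rightarrow> 'n) \<Rightarrow> ('n \<Rightarrow> ereal) \<Rightarrow> ('v option \<times> 'v option) set \<Rightarrow>
    ('v option \<times> 'v option \<Rightarrow> real) \<Rightarrow> ('v option \<Rightarrow> 'n) \<Rightarrow> 'n \<Rightarrow> real" where
  "edge_cong par cap ER f pos w =
     (if cap w = \<infinity> then 0 else load par ER f pos w / real_of_ereal (cap w))"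

definition congestion :: "'n set \<Rightarrow> ('n \<Rightarrow> 'n) \<Rightarrow> 'n \<Rightarrow> ('n \<Rightarrow> ereal) \<Rightarrow>
    ('v option \<times> 'v option) set \<Rightarrow> ('v option \<times> 'v option \<Rightarrow> real) \<Rightarrow> ('v \<Rightarrow> 'n) \<Rightarrow> real" where
  "congestion Nd par g cap ER f \<pi> =
     Max (insert 0 (edge_cong par cap ER f (case_option g \<pi>) ` (Nd - {g})))"

definition min_congestion :: "'n set \<Rightarrow> ('n \<Rightarrow> 'n) \<Rightarrow> 'n \<Rightarrow> ('n \<Rightarrow> ereal) \<Rightarrow> 'v set \<Rightarrow>
    ('v option \<times> 'v option) set \<Rightarrow> ('v option \<times> 'v option \<Rightarrow> real) \<Rightarrow> real" where
  "min_congestion Nd par g cap V ER f =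
     (INF \<pi> \<in> {\<pi>. embedding Nd par g V \<pi>}. congestion Nd par g cap ER f \<pi>)"

text \<open>The children of a node v are numbered 1..d by idx (an arbitrary
  ordering, a parameter of the procedure). If degree v > 3, the star from v
  to its d children is replaced by the complete binary tree in heap layout:
  positions 1..2d-1, parent of position p is p div 2, position 1 is v itself,
  positions 2..d-1 are new auxiliary nodes Inr (v,p), and child number i sits
  at leaf position d-1+i.\<close>

definition big :: "'n set \<Rightarrow> ('n \<Rightarrow> 'n) \<Rightarrow> 'n \<Rightarrow> 'n \<Rightarrow> bool" where
  "big Nd par g v \<longleftrightarrow> v \<in> Nd \<and> degree Nd par g v > 3"

definition heap_node :: "'n \<Rightarrow> nat \<Rightarrow> 'n + ('n \<times> nat)" where
  "heap_node v p = (if p = 1 then Inl v else Inr (v, p))"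

definition bin_nodes :: "'n set \<Rightarrow> ('n \<Rightarrow> 'n) \<Rightarrow> 'n \<Rightarrow> ('n + ('n \<times> nat)) set" where
  "bin_nodes Nd par g = Inl ` Nd \<union>
     {Inr (v, p) | v p. big Nd par g v \<and> 2 \<le> p \<and> p \<le> card (children Nd par g v) - 1}"

fun bin_par :: "'n set \<Rightarrow> ('n \<Rightarrow> 'n) \<Rightarrow> 'n \<Rightarrow> ('n \<Rightarrow> nat) \<Rightarrow>
    'n + ('n \<times> nat) \<Rightarrow> 'n + ('n \<times> nat)" where
  "bin_par Nd par g idx (Inl u) =
     (if u \<noteq> g \<and> big Nd par g (par u)
      then heap_node (par u) ((card (children Nd par g (par u)) - 1 + idx u) div 2)
      else Inl (par u))"
| "bin_par Nd par g idx (Inr (v, p)) = heap_node v (p div 2)"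

fun bin_cap :: "('n \<Rightarrow> real) \<Rightarrow> 'n + ('n \<times> nat) \<Rightarrow> ereal" where
  "bin_cap c (Inl u) = ereal (c u)"
| "bin_cap c (Inr _) = \<infinity>"

end

theory Submission
  imports Defs
begin

lemma heap_node_Inl: "heap_node v q = Inl u \<longleftrightarrow> q = 1 \<and> v = u"
  by (auto simp: heap_node_def)

lemma heap_node_Inr: "heap_node v q = Inr (w,p) \<longleftrightarrow> q \<noteq> 1 \<and> w = v \<and> p = q"
  by (auto simp: heap_node_def)

lemma big_card: "big Nd par g v \<Longrightarrow> card (children Nd par g v) \<ge> 3"
  by (auto simp: big_def degree_def split: if_splits)

lemma par_in: "rooted_tree Nd par g \<Longrightarrow> y \<in> Nd \<Longrightarrow> par y \<in> Nd"
  unfolding rooted_tree_def by (cases "y = g") auto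

lemma parpow_in: "rooted_tree Nd par g \<Longrightarrow> y \<in> Nd \<Longrightarrow> (par ^^ k) y \<in> Nd"
  by (induction k) (auto intro: par_in)

lemma bin_par_inv:
  "\<exists>m. (bin_par Nd par g idx ^^ n) (Inl x) = Inl ((par^^m) x)
      \<or> (\<exists>p. (bin_par Nd par g idx ^^ n) (Inl x) = Inr ((par^^(Suc m)) x, p))"
proof (induction n)
  case 0
  then show ?case by (rule exI[of _ 0]) simp
next
  case (Suc n)
  then obtain m where
    H: "(bin_par Nd par g idx ^^ n) (Inl x) = Inl ((par^^m) x)
      \<or> (\<exists>p. (bin_par Nd par g idx ^^ n) (Inl x) = Inr ((par^^(Suc m)) x, p))" by blast
  show ?case
  proof (cases "(bin_par Nd par g idx ^^ n) (Inl x) = Inl ((par^^m) x)")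
    case True
    let ?y = "(par^^m) x"
    let ?q = "(card (children Nd par g (par ?y)) - 1 + idx ?y) div 2"
    have e: "(bin_par Nd par g idx ^^ Suc n) (Inl x) = bin_par Nd par g idx (Inl ?y)"
      using True by simp
    show ?thesis
    proof (cases "?y \<noteq> g \<and> big Nd par g (par ?y)")
      case c1: True
      show ?thesis
      proof (cases "?q = 1")
        case True
        then show ?thesis using e c1
          by (intro exI[of _ "Suc m"]) (simp add: heap_node_def)
      next
        case False
        then show ?thesis using e c1
          by (intro exI[of _ m]) (simp add: heap_node_def)
      qed
    next
      case False
      then show ?thesis using e by (intro exI[of _ "Suc m"]) auto
    qed
  next
    case False
    then obtain p where p: "(bin_par Nd par g idx ^^ n) (Inl x) = Inr ((par^^(Suc m)) x, p)"
      using H by blast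
    show ?thesis
    proof (cases "p div 2 = 1")
      case True
      then show ?thesis using p
        by (intro exI[of _ "Suc m"]) (simp add: heap_node_def)
    next
      case False
      then show ?thesis using p
        by (intro exI[of _ m]) (simp add: heap_node_def)
    qed
  qed
qed

lemma anc_fwd: "anc (bin_par Nd par g idx) (Inl w) (Inl x) \<Longrightarrow> anc par w x"
proof -
  assume "anc (bin_par Nd par g idx) (Inl w) (Inl x)"
  then obtain k where k: "(bin_par Nd par g idx ^^ k) (Inl x) = Inl w" unfolding anc_def by blast
  from bin_par_inv[where Nd=Nd and par=par and g=g and idx=idx and x=x and n=k]
  obtain m where "(bin_par Nd par g idx ^^ k) (Inl x) = Inl ((par^^m) x)
      \<or> (\<exists>p. (bin_par Nd par g idx ^^ k) (Inl x) = Inr ((par^^(Suc m)) x, p))" by blast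
  then have "(par^^m) x = w" using k by auto
  then show ?thesis unfolding anc_def by blast
qed

lemma heap_up: "1 \<le> q \<Longrightarrow> \<exists>k. (bin_par Nd par g idx ^^ k) (heap_node v q) = Inl v"
proof (induction q rule: less_induct)
  case (less q)
  show ?case
  proof (cases "q = 1")
    case True
    then show ?thesis by (intro exI[of _ 0]) (simp add: heap_node_def)
  next
    case False
    then have "q div 2 < q" "1 \<le> q div 2" using less.prems by auto
    then obtain k where k: "(bin_par Nd par g idx ^^ k) (heap_node v (q div 2)) = Inl v"
      using less.IH by blast
    have "bin_par Nd par g idx (heap_node v q) = heap_node v (q div 2)"
      using False by (simp add: heap_node_def)
    then show ?thesis using k
      by (intro exI[of _ "Suc k"]) (simp add: funpow_Suc_right del: funpow.simps)
  qed
qed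

lemma step_up:
  assumes tree: "rooted_tree Nd par g"
    and idx: "\<forall>v\<in>Nd. bij_betw idx (children Nd par g v) {1..card (children Nd par g v)}"
    and u: "u \<in> Nd"
  shows "\<exists>k. (bin_par Nd par g idx ^^ k) (Inl u) = Inl (par u)"
proof (cases "u \<noteq> g \<and> big Nd par g (par u)")
  case True
  let ?d = "card (children Nd par g (par u))"
  have pu: "par u \<in> Nd" using par_in[OF tree u] .
  have uc: "u \<in> children Nd par g (par u)" using u True by (auto simp: children_def)
  have "idx u \<in> {1..?d}" using idx pu uc bij_betwE by blast
  moreover have "?d \<ge> 3" using True big_card by metis
  ultimately have q: "1 \<le> (?d - 1 + idx u) div 2" by auto
  obtain k where k: "(bin_par Nd par g idx ^^ k) (heap_node (par u) ((?d - 1 + idx u) div 2)) = Inl (par u)"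
    using heap_up[OF q, where Nd=Nd and par=par and g=g and idx=idx and v="par u"] by blast
  show ?thesis using True k
    by (intro exI[of _ "Suc k"]) (simp add: funpow_Suc_right del: funpow.simps)
next
  case False
  then show ?thesis by (intro exI[of _ 1]) auto
qed

lemma anc_trans: "anc f a b \<Longrightarrow> anc f b c \<Longrightarrow> anc f a c"
  unfolding anc_def by (metis funpow_add comp_apply)

lemma anc_bwd:
  assumes tree: "rooted_tree Nd par g"
    and idx: "\<forall>v\<in>Nd. bij_betw idx (children Nd par g v) {1..card (children Nd par g v)}"
    and x: "x \<in> Nd"
  shows "anc (bin_par Nd par g idx) (Inl ((par^^k) x)) (Inl x)"
proof (induction k)
  case 0
  then show ?case unfolding anc_def by (intro exI[of _ 0]) simp
next
  case (Suc k)
  have "(par^^k) x \<in> Nd" using parpow_in[OF tree x] .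
  from step_up[OF tree idx this]
  have "anc (bin_par Nd par g idx) (Inl (par ((par^^k) x))) (Inl ((par^^k) x))"
    unfolding anc_def by blast
  then show ?case using Suc anc_trans by fastforce
qed

lemma anc_iff:
  assumes tree: "rooted_tree Nd par g"
    and idx: "\<forall>v\<in>Nd. bij_betw idx (children Nd par g v) {1..card (children Nd par g v)}"
    and x: "x \<in> Nd"
  shows "anc (bin_par Nd par g idx) (Inl w) (Inl x) \<longleftrightarrow> anc par w x"
  using anc_fwd anc_bwd[OF tree idx x] unfolding anc_def by metis

lemma leaves_eq:
  fixes Nd :: "'a set"
  assumes tree: "rooted_tree Nd par g"
    and idx: "\<forall>v\<in>Nd. bij_betw idx (children Nd par g v) {1..card (children Nd par g v)}"
  shows "leaves (bin_nodes Nd par g) (bin_par Nd par g idx) (Inl g) = Inl ` leaves Nd par g"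
proof
  show "leaves (bin_nodes Nd par g) (bin_par Nd par g idx) (Inl g) \<subseteq> Inl ` leaves Nd par g"
  proof
    fix z assume z: "z \<in> leaves (bin_nodes Nd par g) (bin_par Nd par g idx) (Inl g)"
    then have zb: "z \<in> bin_nodes Nd par g" "z \<noteq> Inl g"
      and nc: "\<And>y. y \<in> bin_nodes Nd par g \<Longrightarrow> y \<noteq> Inl g \<Longrightarrow> bin_par Nd par g idx y \<noteq> z"
      by (auto simp: leaves_def children_def)
    show "z \<in> Inl ` leaves Nd par g"
    proof (cases z)
      case (Inl u)
      with zb have u: "u \<in> Nd" "u \<noteq> g" by (auto simp: bin_nodes_def)
      have "children Nd par g u = {}"
      proof (rule ccontr)
        assume "children Nd par g u \<noteq> {}"
        then obtain w where w: "w \<in> Nd" "w \<noteq> g" "par w = u" by (auto simp: children_def)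
        show False
        proof (cases "big Nd par g u")
          case True
          then have "card (children Nd par g u) \<ge> 3" by (rule big_card)
          then have "Inr (u, 2) \<in> bin_nodes Nd par g" using True by (auto simp: bin_nodes_def)
          moreover have "bin_par Nd par g idx (Inr (u,2)) = z" using Inl by (simp add: heap_node_def)
          ultimately show False using nc[of "Inr (u,2)"] by simp
        next
          case False
          have "Inl w \<in> bin_nodes Nd par g" using w by (auto simp: bin_nodes_def)
          moreover have "bin_par Nd par g idx (Inl w) = z" using Inl False w by simp
          ultimately show False using nc[of "Inl w"] w by simp
        qed
      qed
      then show ?thesis using u Inl by (auto simp: leaves_def)
    next
      case (Inr b)
      then obtain v p where zv: "z = Inr (v,p)" by (cases b) auto
      let ?d = "card (children Nd par g v)"
      from zb zv have bv: "big Nd par g v" "2 \<le> p" "p \<le> ?d - 1"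
        by (auto simp: bin_nodes_def)
      have hp: "heap_node v p = z" using zv bv by (simp add: heap_node_def)
      show ?thesis
      proof (cases "2*p \<le> ?d - 1")
        case True
        have "Inr (v, 2*p) \<in> bin_nodes Nd par g" using True bv by (auto simp: bin_nodes_def)
        moreover have "bin_par Nd par g idx (Inr (v,2*p)) = z" using hp by simp
        ultimately show ?thesis using nc[of "Inr (v,2*p)"] by simp
      next
        case False
        have d3: "?d \<ge> 3" using bv(1) by (rule big_card)
        define i where "i = 2*p + 1 - ?d"
        have i: "i \<in> {1..?d}" using False bv d3 unfolding i_def by auto
        have vN: "v \<in> Nd" using bv(1) by (simp add: big_def)
        then have "bij_betw idx (children Nd par g v) {1..?d}" using idx by blast
        then obtain u where uc: "u \<in> children Nd par g v" and iu: "idx u = i"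
          using i by (metis bij_betw_def imageE)
        from uc have u: "u \<in> Nd" "u \<noteq> g" "par u = v" by (auto simp: children_def)
        have "?d - 1 + idx u = 2*p" using iu False d3 unfolding i_def by arith
        then have "(?d - 1 + idx u) div 2 = p" by simp
        then have "bin_par Nd par g idx (Inl u) = z" using u bv(1) hp by simp
        moreover have "Inl u \<in> bin_nodes Nd par g" using u by (auto simp: bin_nodes_def)
        ultimately show ?thesis using nc[of "Inl u"] u by simp
      qed
    qed
  qed
next
  show "Inl ` leaves Nd par g \<subseteq> leaves (bin_nodes Nd par g) (bin_par Nd par g idx) (Inl g)"
  proof
    fix z :: "'a + 'a \<times> nat" assume "z \<in> Inl ` leaves Nd par g"
    then obtain u where zu: "z = Inl u" and u: "u \<in> Nd" "u \<noteq> g" "children Nd par g u = {}"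
      by (auto simp: leaves_def)
    have nb: "\<not> big Nd par g u"
    proof
      assume "big Nd par g u"
      then have "card (children Nd par g u) \<ge> 3" by (rule big_card)
      then show False using u(3) by simp
    qed
    have nc: "\<And>y. y \<in> bin_nodes Nd par g \<Longrightarrow> y \<noteq> Inl g \<Longrightarrow> bin_par Nd par g idx y \<noteq> Inl u"
    proof
      fix y assume y: "y \<in> bin_nodes Nd par g" "y \<noteq> Inl g" and e: "bin_par Nd par g idx y = Inl u"
      show False
      proof (cases y)
        case (Inl w)
        with y have w: "w \<in> Nd" "w \<noteq> g" by (auto simp: bin_nodes_def)
        have "par w = u" using e Inl w
          by (auto simp: heap_node_Inl split: if_splits)
        then show False using w u(3) by (auto simp: children_def)
      next
        case (Inr b)
        then obtain v p where yv: "y = Inr (v,p)" by (cases b) auto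
        with y have "big Nd par g v" by (auto simp: bin_nodes_def)
        moreover have "v = u" using e yv by (simp add: heap_node_Inl)
        ultimately show False using nb by simp
      qed
    qed
    have "children (bin_nodes Nd par g) (bin_par Nd par g idx) (Inl g) (Inl u) = {}"
      unfolding children_def using nc by blast
    moreover have "Inl u \<in> bin_nodes Nd par g" using u by (simp add: bin_nodes_def)
    ultimately show "z \<in> leaves (bin_nodes Nd par g) (bin_par Nd par g idx) (Inl g)"
      using zu u unfolding leaves_def by simp
  qed
qed

lemma cong_local:
  assumes ER: "ER \<subseteq> (Some ` V) \<times> (insert None (Some ` V))"
    and eq: "\<forall>v\<in>V. \<pi> v = \<pi>' v"
  shows "congestion Nd par g cap ER f \<pi> = congestion Nd par g cap ER f \<pi>'"
proof -
  have pe: "\<And>e. e \<in> ER \<Longrightarrow> case_option g \<pi> (fst e) = case_option g \<pi>' (fst e)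
       \<and> case_option g \<pi> (snd e) = case_option g \<pi>' (snd e)"
    using ER eq by fastforce
  have "\<And>w. load par ER f (case_option g \<pi>) w = load par ER f (case_option g \<pi>') w"
    unfolding load_def by (rule sum.cong) (use pe in auto)
  then have "\<And>w. edge_cong par cap ER f (case_option g \<pi>) w = edge_cong par cap ER f (case_option g \<pi>') w"
    unfolding edge_cong_def by simp
  then show ?thesis unfolding congestion_def by simp
qed

lemma cong_eq:
  fixes Nd :: "'a set" and \<pi> :: "'v \<Rightarrow> 'a"
  assumes tree: "rooted_tree Nd par g"
    and idx: "\<forall>v\<in>Nd. bij_betw idx (children Nd par g v) {1..card (children Nd par g v)}"
    and piN: "\<pi> ` V \<subseteq> Nd"
    and ER: "ER \<subseteq> (Some ` V) \<times> (insert None (Some ` V))"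
  shows "congestion Nd par g (\<lambda>w. ereal (c w)) ER f \<pi> =
     congestion (bin_nodes Nd par g) (bin_par Nd par g idx) (Inl g) (bin_cap c) ER f (Inl \<circ> \<pi>)"
proof -
  define pos where "pos = case_option g \<pi>"
  have gN: "g \<in> Nd" using tree by (simp add: rooted_tree_def)
  have posN: "\<And>e. e \<in> ER \<Longrightarrow> pos (fst e) \<in> Nd \<and> pos (snd e) \<in> Nd"
    using ER piN gN unfolding pos_def by fastforce
  have cpos: "case_option (Inl g) (Inl \<circ> \<pi>) = Inl \<circ> pos"
  proof
    fix x show "case_option (Inl g) (Inl \<circ> \<pi>) x = (Inl \<circ> pos) x"
      unfolding pos_def by (cases x) auto
  qed
  have ld: "\<And>w. load (bin_par Nd par g idx) ER f (Inl \<circ> pos) (Inl w) = load par ER f pos w"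
    unfolding load_def
  proof (rule sum.cong)
    fix w e assume e: "e \<in> ER"
    have "on_path (bin_par Nd par g idx) (Inl w) ((Inl \<circ> pos) (fst e)) ((Inl \<circ> pos) (snd e))
          = on_path par w (pos (fst e)) (pos (snd e))"
      unfolding on_path_def comp_def
      using anc_iff[OF tree idx, of "pos (fst e)" w] anc_iff[OF tree idx, of "pos (snd e)" w] posN[OF e]
      by simp
    then show "(if on_path (bin_par Nd par g idx) (Inl w) ((Inl \<circ> pos) (fst e)) ((Inl \<circ> pos) (snd e)) then f e else 0)
      = (if on_path par w (pos (fst e)) (pos (snd e)) then f e else 0)" by simp
  qed simp
  define ET where "ET = edge_cong (bin_par Nd par g idx) (bin_cap c) ER f (Inl \<circ> pos)"
  define EN where "EN = edge_cong par (\<lambda>w. ereal (c w)) ER f pos"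
  have ETl: "\<And>w. ET (Inl w) = EN w" unfolding ET_def EN_def edge_cong_def using ld by simp
  have ETr: "\<And>b. ET (Inr b) = 0" unfolding ET_def edge_cong_def by simp
  have nodes: "bin_nodes Nd par g - {Inl g} = Inl ` (Nd - {g}) \<union> (bin_nodes Nd par g \<inter> range Inr)"
    unfolding bin_nodes_def by auto
  have "ET ` (bin_nodes Nd par g - {Inl g}) = EN ` (Nd - {g}) \<union> ET ` (bin_nodes Nd par g \<inter> range Inr)"
    unfolding nodes image_Un image_image ETl by simp
  moreover have "ET ` (bin_nodes Nd par g \<inter> range Inr) \<subseteq> {0}" using ETr by auto
  ultimately have "insert 0 (ET ` (bin_nodes Nd par g - {Inl g})) = insert 0 (EN ` (Nd - {g}))"
    by auto
  then show ?thesis unfolding congestion_def cpos ET_def EN_def pos_def by simp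
qed

theorem lemma1:
  fixes Nd :: "'n set" and par :: "'n \<Rightarrow> 'n" and g :: 'n
    and c :: "'n \<Rightarrow> real" and idx :: "'n \<Rightarrow> nat"
    and V :: "'v set" and ER :: "('v option \<times> 'v option) set"
    and f :: "'v option \<times> 'v option \<Rightarrow> real"
  assumes tree: "rooted_tree Nd par g"
    and cap_pos: "\<forall>w\<in>Nd - {g}. c w > 0"
    and idx: "\<forall>v\<in>Nd. bij_betw idx (children Nd par g v) {1..card (children Nd par g v)}"
    and req: "request_graph V ER f"
  shows "leaves (bin_nodes Nd par g) (bin_par Nd par g idx) (Inl g) = Inl ` leaves Nd par g
    \<and> (\<forall>\<pi>. embedding Nd par g V \<pi> \<longrightarrow>
          congestion Nd par g (\<lambda>w. ereal (c w)) ER f \<pi> =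
          congestion (bin_nodes Nd par g) (bin_par Nd par g idx) (Inl g) (bin_cap c) ER f (Inl \<circ> \<pi>))
    \<and> min_congestion Nd par g (\<lambda>w. ereal (c w)) V ER f =
      min_congestion (bin_nodes Nd par g) (bin_par Nd par g idx) (Inl g) (bin_cap c) V ER f"
proof -
  have L: "leaves (bin_nodes Nd par g) (bin_par Nd par g idx) (Inl g) = Inl ` leaves Nd par g"
    by (rule leaves_eq[OF tree idx])
  have ER: "ER \<subseteq> (Some ` V) \<times> (insert None (Some ` V))"
    using req by (simp add: request_graph_def)
  have lN: "leaves Nd par g \<subseteq> Nd" by (auto simp: leaves_def)
  have C: "\<And>\<pi>. embedding Nd par g V \<pi> \<Longrightarrow>
          congestion Nd par g (\<lambda>w. ereal (c w)) ER f \<pi> =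
          congestion (bin_nodes Nd par g) (bin_par Nd par g idx) (Inl g) (bin_cap c) ER f (Inl \<circ> \<pi>)"
  proof -
    fix \<pi> :: "'v \<Rightarrow> 'n" assume "embedding Nd par g V \<pi>"
    then have "\<pi> ` V \<subseteq> Nd" using lN unfolding embedding_def by blast
    then show "congestion Nd par g (\<lambda>w. ereal (c w)) ER f \<pi> =
          congestion (bin_nodes Nd par g) (bin_par Nd par g idx) (Inl g) (bin_cap c) ER f (Inl \<circ> \<pi>)"
      by (rule cong_eq[OF tree idx _ ER])
  qed
  have S: "(\<lambda>\<pi>. congestion Nd par g (\<lambda>w. ereal (c w)) ER f \<pi>) ` {\<pi>. embedding Nd par g V \<pi>}
     = (\<lambda>\<pi>. congestion (bin_nodes Nd par g) (bin_par Nd par g idx) (Inl g) (bin_cap c) ER f \<pi>)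
         ` {\<pi>. embedding (bin_nodes Nd par g) (bin_par Nd par g idx) (Inl g) V \<pi>}"
  proof (rule set_eqI, rule iffI)
    fix r assume "r \<in> (\<lambda>\<pi>. congestion Nd par g (\<lambda>w. ereal (c w)) ER f \<pi>) ` {\<pi>. embedding Nd par g V \<pi>}"
    then obtain \<pi> where e: "embedding Nd par g V \<pi>" and r: "r = congestion Nd par g (\<lambda>w. ereal (c w)) ER f \<pi>"
      by blast
    have "embedding (bin_nodes Nd par g) (bin_par Nd par g idx) (Inl g) V (Inl \<circ> \<pi>)"
      using e unfolding embedding_def L by (auto intro: comp_inj_on)
    then show "r \<in> (\<lambda>\<pi>. congestion (bin_nodes Nd par g) (bin_par Nd par g idx) (Inl g) (bin_cap c) ER f \<pi>)
         ` {\<pi>. embedding (bin_nodes Nd par g) (bin_par Nd par g idx) (Inl g) V \<pi>}"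
      using r C[OF e] by (metis (mono_tags, lifting) image_eqI mem_Collect_eq)
  next
    fix r assume "r \<in> (\<lambda>\<pi>. congestion (bin_nodes Nd par g) (bin_par Nd par g idx) (Inl g) (bin_cap c) ER f \<pi>)
         ` {\<pi>. embedding (bin_nodes Nd par g) (bin_par Nd par g idx) (Inl g) V \<pi>}"
    then obtain \<pi>' where e: "embedding (bin_nodes Nd par g) (bin_par Nd par g idx) (Inl g) V \<pi>'"
      and r: "r = congestion (bin_nodes Nd par g) (bin_par Nd par g idx) (Inl g) (bin_cap c) ER f \<pi>'"
      by blast
    define \<pi> where "\<pi> = projl \<circ> \<pi>'"
    have im: "\<pi>' ` V \<subseteq> Inl ` leaves Nd par g" using e L by (simp add: embedding_def)
    have eqv: "\<forall>v\<in>V. (Inl \<circ> \<pi>) v = \<pi>' v" using im unfolding \<pi>_def by force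
    have "inj_on \<pi>' V" using e by (simp add: embedding_def)
    then have "inj_on (Inl \<circ> \<pi> :: 'v \<Rightarrow> 'n + 'n \<times> nat) V" using eqv inj_on_cong[of V "Inl \<circ> \<pi>" \<pi>'] by (metis (no_types))
    then have "inj_on \<pi> V" by (rule inj_on_imageI2)
    moreover have "\<pi> ` V \<subseteq> leaves Nd par g" using im unfolding \<pi>_def by force
    ultimately have en: "embedding Nd par g V \<pi>" by (simp add: embedding_def)
    have "r = congestion (bin_nodes Nd par g) (bin_par Nd par g idx) (Inl g) (bin_cap c) ER f (Inl \<circ> \<pi>)"
      using r cong_local[OF ER eqv] by (simp add: comp_def)
    then have "r = congestion Nd par g (\<lambda>w. ereal (c w)) ER f \<pi>" using C[OF en] by simp
    then show "r \<in> (\<lambda>\<pi>. congestion Nd par g (\<lambda>w. ereal (c w)) ER f \<pi>) ` {\<pi>. embedding Nd par g V \<pi>}"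
      using en by (metis (mono_tags, lifting) image_eqI mem_Collect_eq)
  qed
  have M: "min_congestion Nd par g (\<lambda>w. ereal (c w)) V ER f =
      min_congestion (bin_nodes Nd par g) (bin_par Nd par g idx) (Inl g) (bin_cap c) V ER f"
    unfolding min_congestion_def using S by simp
  show ?thesis using L C M by blast
qed

end
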